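(* Let $E\subset\mathbb R^n$ and $F\subset\mathbb R^m$ be closed sets, and let $P:\mathbb R^n\to\mathbb R^m$ and $Q:\mathbb R^m\to\mathbb R^n$ be polynomial maps such that $P(E)=F$ and $Q\circ P$ is the identity on $E$. For $f\in\mathcal S(F)$ let $P^\flat f=f\circ P|_E$. Then $P^\flat$ maps $\mathcal S(F)$ into $\mathcal S(E)$ continuously.
   Context: For a closed set $E\subset\mathbb R^k$, $\mathcal S(E)$ denotes the space of restrictions to $E$ of Schwartz functions on $\mathbb R^k$, endowed with the quotient topology of $\mathcal S(\mathbb R^k)/\{f:f|_E=0\}$. *)

theory Defs
  imports "HOL-Analysis.Analysis"
begin

inductive polyfun :: "(real^'n \<Rightarrow> real) \<Rightarrow> bool" where
  pf_const: "polyfun (\<lambda>x. c)"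
| pf_coord: "polyfun (\<lambda>x. x $ i)"
| pf_add: "polyfun f \<Longrightarrow> polyfun g \<Longrightarrow> polyfun (\<lambda>x. f x + g x)"
| pf_mult: "polyfun f \<Longrightarrow> polyfun g \<Longrightarrow> polyfun (\<lambda>x. f x * g x)"

definition poly_map :: "(real^'n \<Rightarrow> real^'m) \<Rightarrow> bool" where
  "poly_map P \<longleftrightarrow> (\<forall>j. polyfun (\<lambda>x. P x $ j))"

definition pdiff :: "'n \<Rightarrow> (real^'n \<Rightarrow> real) \<Rightarrow> real^'n \<Rightarrow> real" where
  "pdiff i f x = deriv (\<lambda>t. f (x + t *\<^sub>R axis i 1)) 0"

fun Dpart :: "'n list \<Rightarrow> (real^'n \<Rightarrow> real) \<Rightarrow> real^'n \<Rightarrow> real" where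
  "Dpart [] f = f"
| "Dpart (i # is) f = pdiff i (Dpart is f)"

definition smooth_fun :: "(real^'n \<Rightarrow> real) \<Rightarrow> bool" where
  "smooth_fun f \<longleftrightarrow>
     (\<forall>is. continuous_on UNIV (Dpart is f) \<and>
        (\<forall>i x. ((\<lambda>t. Dpart is f (x + t *\<^sub>R axis i 1)) has_real_derivative pdiff i (Dpart is f) x) (at 0)))"

definition monom :: "('n::finite \<Rightarrow> nat) \<Rightarrow> real^'n \<Rightarrow> real" where
  "monom \<alpha> x = (\<Prod>i\<in>UNIV. (x $ i) ^ \<alpha> i)"

definition schwartz :: "(real^'n::finite \<Rightarrow> real) set" where
  "schwartz = {f. smooth_fun f \<and>
      (\<forall>\<alpha> is. bounded (range (\<lambda>x. monom \<alpha> x * Dpart is f x)))}"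

definition sw_seminorm :: "('n::finite \<Rightarrow> nat) \<Rightarrow> 'n list \<Rightarrow> (real^'n \<Rightarrow> real) \<Rightarrow> real" where
  "sw_seminorm \<alpha> is f = (SUP x. \<bar>monom \<alpha> x * Dpart is f x\<bar>)"

definition schwartz_top :: "(real^'n::finite \<Rightarrow> real) topology" where
  "schwartz_top = topology (\<lambda>V. V \<subseteq> schwartz \<and>
     (\<forall>f\<in>V. \<exists>N::nat. \<exists>\<epsilon>>0. {g\<in>schwartz. \<forall>\<alpha> is. sum \<alpha> UNIV \<le> N \<longrightarrow> length is \<le> N \<longrightarrow>
          sw_seminorm \<alpha> is (\<lambda>x. g x - f x) < \<epsilon>} \<subseteq> V))"

text \<open>A function on E is represented by its extension by 0 outside E.\<close>
definition restr :: "(real^'n) set \<Rightarrow> (real^'n \<Rightarrow> real) \<Rightarrow> real^'n \<Rightarrow> real" where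
  "restr E f = (\<lambda>x. if x \<in> E then f x else 0)"

definition schwartz_on :: "(real^'n::finite) set \<Rightarrow> (real^'n \<Rightarrow> real) set" where
  "schwartz_on E = restr E ` schwartz"

text \<open>Quotient topology of S(R^n)/{f : f|E = 0}, transported to S(E) via restriction.\<close>
definition schwartz_on_top :: "(real^'n::finite) set \<Rightarrow> (real^'n \<Rightarrow> real) topology" where
  "schwartz_on_top E = topology (\<lambda>U. U \<subseteq> schwartz_on E \<and>
      openin schwartz_top {f \<in> schwartz. restr E f \<in> U})"

definition pullback :: "(real^'n) set \<Rightarrow> (real^'n \<Rightarrow> real^'m) \<Rightarrow> (real^'m \<Rightarrow> real) \<Rightarrow> real^'n \<Rightarrow> real" where
  "pullback E P f = restr E (f \<circ> P)"

end

theory Submission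
  imports Defs
begin

lemma axis_nth1: "axis i (1::real) $ k = (if k = i then 1 else 0)"
  by (simp add: axis_def)

lemma polyfun_pdiff:
  assumes "polyfun p"
  shows "polyfun (pdiff i p) \<and> (\<forall>x. ((\<lambda>t. p (x + t *\<^sub>R axis i 1)) has_real_derivative pdiff i p x) (at 0))"
proof -
  have "\<exists>p'. polyfun p' \<and> (\<forall>x. ((\<lambda>t. p (x + t *\<^sub>R axis i 1)) has_real_derivative p' x) (at 0))"
    using assms
  proof (induction rule: polyfun.induct)
    case (pf_const c)
    show ?case by (rule exI[of _ "\<lambda>x. 0"]) (auto intro: polyfun.pf_const)
  next
    case (pf_coord k)
    show ?case
      by (rule exI[of _ "\<lambda>x. if k = i then 1 else 0"])
         (auto intro: polyfun.pf_const intro!: derivative_eq_intros simp: axis_nth1)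
  next
    case (pf_add f g)
    then obtain f' g' where "polyfun f'" "polyfun g'"
      and df: "\<And>x. ((\<lambda>t. f (x + t *\<^sub>R axis i 1)) has_real_derivative f' x) (at 0)"
      and dg: "\<And>x. ((\<lambda>t. g (x + t *\<^sub>R axis i 1)) has_real_derivative g' x) (at 0)" by blast
    show ?case
      by (rule exI[of _ "\<lambda>x. f' x + g' x"])
         (auto intro: polyfun.pf_add \<open>polyfun f'\<close> \<open>polyfun g'\<close> intro!: DERIV_add df dg)
  next
    case (pf_mult f g)
    then obtain f' g' where "polyfun f'" "polyfun g'"
      and df: "\<And>x. ((\<lambda>t. f (x + t *\<^sub>R axis i 1)) has_real_derivative f' x) (at 0)"
      and dg: "\<And>x. ((\<lambda>t. g (x + t *\<^sub>R axis i 1)) has_real_derivative g' x) (at 0)" by blast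
    show ?case
      apply (rule exI[of _ "\<lambda>x. f' x * g x + f x * g' x"])
      apply (intro conjI allI)
       apply (intro polyfun.pf_add polyfun.pf_mult \<open>polyfun f'\<close> \<open>polyfun g'\<close> pf_mult.hyps)
      subgoal for x using DERIV_mult[OF df[of x] dg[of x]] by (simp add: mult.commute)
      done
  qed
  then obtain p' where p': "polyfun p'" "\<And>x. ((\<lambda>t. p (x + t *\<^sub>R axis i 1)) has_real_derivative p' x) (at 0)"
    by blast
  have "pdiff i p = p'"
    using p'(2) by (auto simp: pdiff_def fun_eq_iff intro: DERIV_imp_deriv)
  with p' show ?thesis by simp
qed

lemma polyfun_cont: "polyfun p \<Longrightarrow> continuous_on UNIV p"
  by (induction rule: polyfun.induct) (auto intro!: continuous_intros)

lemma polyfun_comp: "polyfun f \<Longrightarrow> poly_map P \<Longrightarrow> polyfun (\<lambda>x. f (P x))"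
  by (induction rule: polyfun.induct) (auto intro: polyfun.intros simp: poly_map_def)

lemma polyfun_sum: "finite S \<Longrightarrow> (\<And>i. i \<in> S \<Longrightarrow> polyfun (f i)) \<Longrightarrow> polyfun (\<lambda>x. \<Sum>i\<in>S. f i x)"
  by (induction rule: finite_induct) (auto intro: polyfun.intros)

lemma polyfun_diff: "polyfun f \<Longrightarrow> polyfun g \<Longrightarrow> polyfun (\<lambda>x. f x - g x)"
proof -
  assume "polyfun f" "polyfun g"
  then have "polyfun (\<lambda>x. f x + (-1) * g x)" by (intro polyfun.intros)
  then show ?thesis by simp
qed

lemma polyfun_neg: "polyfun f \<Longrightarrow> polyfun (\<lambda>x. - f x)"
  using polyfun_diff[OF polyfun.pf_const[of 0]] by simp

lemma polyfun_growth:
  assumes "polyfun p"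
  shows "\<exists>C K. C \<ge> 0 \<and> (\<forall>x. \<bar>p x\<bar> \<le> C * (1 + norm x) ^ K)"
  using assms
proof (induction rule: polyfun.induct)
  case (pf_const c)
  then show ?case by (rule_tac exI[of _ "\<bar>c\<bar>"], rule_tac exI[of _ 0]) auto
next
  case (pf_coord i)
  show ?case
    apply (rule exI[of _ 1], rule exI[of _ 1])
  proof (intro conjI allI)
    fix x
    show "\<bar>x $ i\<bar> \<le> 1 * (1 + norm x) ^ 1" using component_le_norm_cart[of x i] by simp
  qed simp
next
  case (pf_add f g)
  then obtain C1 K1 C2 K2 where c: "C1 \<ge> 0" "C2 \<ge> 0"
    and b1: "\<And>x. \<bar>f x\<bar> \<le> C1 * (1 + norm x) ^ K1" and b2: "\<And>x. \<bar>g x\<bar> \<le> C2 * (1 + norm x) ^ K2"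
    by blast
  show ?case
  proof (intro exI conjI allI)
    show "\<bar>f x + g x\<bar> \<le> (C1 + C2) * (1 + norm x) ^ (K1 + K2)" for x
    proof -
    have "(1 + norm x) ^ K1 \<le> (1 + norm x) ^ (K1 + K2)" "(1 + norm x) ^ K2 \<le> (1 + norm x) ^ (K1 + K2)"
      by (auto intro!: power_increasing)
    then have "C1 * (1 + norm x) ^ K1 \<le> C1 * (1 + norm x) ^ (K1 + K2)"
       "C2 * (1 + norm x) ^ K2 \<le> C2 * (1 + norm x) ^ (K1 + K2)"
      using c by (auto intro: mult_left_mono)
    then show ?thesis
      using b1[of x] b2[of x] by (simp add: algebra_simps)
    qed
  qed (use c in auto)
next
  case (pf_mult f g)
  then obtain C1 K1 C2 K2 where c: "C1 \<ge> 0" "C2 \<ge> 0"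
    and b1: "\<And>x. \<bar>f x\<bar> \<le> C1 * (1 + norm x) ^ K1" and b2: "\<And>x. \<bar>g x\<bar> \<le> C2 * (1 + norm x) ^ K2"
    by blast
  show ?case
  proof (intro exI conjI allI)
    fix x
    have "\<bar>f x * g x\<bar> \<le> (C1 * (1 + norm x) ^ K1) * (C2 * (1 + norm x) ^ K2)"
      unfolding abs_mult using c by (intro mult_mono b1 b2) auto
    then show "\<bar>f x * g x\<bar> \<le> (C1 * C2) * (1 + norm x) ^ (K1 + K2)"
      by (simp add: power_add algebra_simps)
  qed (use c in auto)
qed

lemma polymap_growth:
  assumes "poly_map Q"
  shows "\<exists>C K. C \<ge> 0 \<and> (\<forall>y. norm (Q y) \<le> C * (1 + norm y) ^ K)"
proof -
  have "\<forall>j. \<exists>C K. C \<ge> 0 \<and> (\<forall>y. \<bar>Q y $ j\<bar> \<le> C * (1 + norm y) ^ K)"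
    using assms polyfun_growth unfolding poly_map_def by blast
  then obtain C K where c: "\<And>j. C j \<ge> 0" and b: "\<And>j y. \<bar>Q y $ j\<bar> \<le> C j * (1 + norm y) ^ K j"
    by metis
  define KK where "KK = (\<Sum>j\<in>UNIV. K j)"
  show ?thesis
  proof (intro exI conjI allI)
    fix y
    have "norm (Q y) \<le> (\<Sum>j\<in>UNIV. \<bar>Q y $ j\<bar>)" by (rule norm_le_l1_cart)
    also have "\<dots> \<le> (\<Sum>j\<in>UNIV. C j * (1 + norm y) ^ KK)"
    proof (rule sum_mono)
      fix j :: 'b
      have "K j \<le> KK" unfolding KK_def by (rule member_le_sum) auto
      then have "(1 + norm y) ^ K j \<le> (1 + norm y) ^ KK" by (auto intro!: power_increasing)
      then show "\<bar>Q y $ j\<bar> \<le> C j * (1 + norm y) ^ KK"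
        using b[of y j] c[of j] by (meson mult_left_mono order_trans)
    qed
    finally show "norm (Q y) \<le> (\<Sum>j\<in>UNIV. C j) * (1 + norm y) ^ KK" by (simp add: sum_distrib_right)
  qed (use c in \<open>auto intro: sum_nonneg\<close>)
qed



lemma line_deriv_at:
  assumes dg: "\<And>y. ((\<lambda>t. g (y + t *\<^sub>R axis j 1)) has_real_derivative pdiff j g y) (at 0)"
  shows "((\<lambda>s. g (z + s *\<^sub>R axis j 1)) has_real_derivative pdiff j g (z + t *\<^sub>R axis j 1)) (at t)"
proof -
  have "((\<lambda>s. g ((z + t *\<^sub>R axis j 1) + s *\<^sub>R axis j 1)) has_real_derivative pdiff j g (z + t *\<^sub>R axis j 1)) (at 0)"
    by (rule dg)
  then have "((\<lambda>s. g (z + (s + t) *\<^sub>R axis j 1)) has_real_derivative pdiff j g (z + t *\<^sub>R axis j 1)) (at 0)"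
    by (simp add: scaleR_add_left algebra_simps)
  then show ?thesis
    using DERIV_shift[of "\<lambda>s. g (z + s *\<^sub>R axis j 1)" _ 0 t] by simp
qed

lemma one_coord_est:
  assumes dg: "\<And>y. ((\<lambda>t. g (y + t *\<^sub>R axis j 1)) has_real_derivative pdiff j g y) (at 0)"
    and H: "\<And>s. s \<in> closed_segment 0 h \<Longrightarrow> \<bar>pdiff j g (z + s *\<^sub>R axis j 1) - c\<bar> \<le> e"
  shows "\<bar>g (z + h *\<^sub>R axis j 1) - g z - h * c\<bar> \<le> 3 * e * \<bar>h\<bar>"
proof -
  define f where "f s = g (z + s *\<^sub>R axis j 1)" for s
  define f' where "f' s = pdiff j g (z + s *\<^sub>R axis j 1)" for s
  have 0: "0 \<in> closed_segment 0 h" by simp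
  have "norm (f h - f 0 - (h - 0) *\<^sub>R f' 0) \<le> norm (h - 0) * (2 * e)"
  proof (rule vector_differentiable_bound_linearization[of "closed_segment 0 h" f f' 0 h])
    show "(f has_vector_derivative f' x) (at x within closed_segment 0 h)" for x
      unfolding f_def f'_def has_real_derivative_iff_has_vector_derivative[symmetric]
      by (rule DERIV_subset[OF line_deriv_at[OF dg]]) auto
    show "norm (f' x - f' 0) \<le> 2 * e" if "x \<in> closed_segment 0 h" for x
      using H[OF that] H[OF 0] unfolding f'_def by (simp add: abs_real_def split: if_splits)
  qed (auto simp: 0)
  then have a: "\<bar>g (z + h *\<^sub>R axis j 1) - g z - h * pdiff j g z\<bar> \<le> \<bar>h\<bar> * (2 * e)"
    by (simp add: f_def f'_def)
  have b: "\<bar>h * pdiff j g z - h * c\<bar> \<le> \<bar>h\<bar> * e"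
    using H[OF 0] by (simp add: right_diff_distrib[symmetric] abs_mult mult_left_mono)
  have "\<bar>g (z + h *\<^sub>R axis j 1) - g z - h * c\<bar> \<le> \<bar>g (z + h *\<^sub>R axis j 1) - g z - h * pdiff j g z\<bar> + \<bar>h * pdiff j g z - h * c\<bar>"
    by linarith
  also have "\<dots> \<le> 3 * e * \<bar>h\<bar>" using a b by (simp add: algebra_simps)
  finally show ?thesis .
qed

definition wpart :: "'m set \<Rightarrow> real^'m \<Rightarrow> real^'m" where
  "wpart S v = (\<chi> j. if j \<in> S then v $ j else 0)"

lemma wpart_insert: "k \<notin> S \<Longrightarrow> wpart (insert k S) v = wpart S v + (v $ k) *\<^sub>R axis k 1"
  by (auto simp: wpart_def vec_eq_iff axis_def)

lemma wpart_UNIV: "wpart UNIV v = v"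
  by (simp add: wpart_def vec_eq_iff)

lemma wpart_empty: "wpart {} v = 0"
  by (simp add: wpart_def vec_eq_iff)

lemma multi_coord_est:
  fixes g :: "real^'m \<Rightarrow> real"
  assumes dg: "\<And>j y. ((\<lambda>t. g (y + t *\<^sub>R axis j 1)) has_real_derivative pdiff j g y) (at 0)"
    and H: "\<And>z j. norm (z - y) \<le> norm v \<Longrightarrow> \<bar>pdiff j g z - pdiff j g y\<bar> \<le> e"
  shows "\<bar>g (y + wpart S v) - g y - (\<Sum>j\<in>S. v $ j * pdiff j g y)\<bar> \<le> 3 * e * (\<Sum>j\<in>S. \<bar>v $ j\<bar>)"
proof -
  have "finite S" by simp
  then show ?thesis
  proof (induction S rule: finite_induct)
    case empty
    then show ?case by (simp add: wpart_empty)
  next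
    case (insert k S)
    let ?z = "y + wpart S v"
    have est: "\<bar>g (?z + v $ k *\<^sub>R axis k 1) - g ?z - v $ k * pdiff k g y\<bar> \<le> 3 * e * \<bar>v $ k\<bar>"
    proof (rule one_coord_est[OF dg])
      fix s assume s: "s \<in> closed_segment 0 (v $ k)"
      then have sa: "\<bar>s\<bar> \<le> \<bar>v $ k\<bar>"
        by (auto simp: closed_segment_eq_real_ivl split: if_splits)
      have "norm (?z + s *\<^sub>R axis k 1 - y) \<le> norm v"
      proof (rule norm_le_componentwise_cart)
        fix i
        show "norm ((?z + s *\<^sub>R axis k 1 - y) $ i) \<le> norm (v $ i)"
          using sa insert(2) by (auto simp: wpart_def axis_def)
      qed
      then show "\<bar>pdiff k g (?z + s *\<^sub>R axis k 1) - pdiff k g y\<bar> \<le> e" by (rule H)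
    qed
    have eq: "y + wpart (insert k S) v = ?z + v $ k *\<^sub>R axis k 1"
      using insert(2) by (simp add: wpart_insert add.assoc)
    show ?case
      unfolding eq using insert(2,3) est insert(1)
      by (simp add: sum.insert algebra_simps)
  qed
qed

lemma frechet_partials:
  fixes g :: "real^'m \<Rightarrow> real"
  assumes dg: "\<And>j y. ((\<lambda>t. g (y + t *\<^sub>R axis j 1)) has_real_derivative pdiff j g y) (at 0)"
    and cont: "\<And>j. continuous_on UNIV (pdiff j g)"
  shows "(g has_derivative (\<lambda>v. \<Sum>j\<in>UNIV. v $ j * pdiff j g y)) (at y)"
  unfolding has_derivative_at_alt
proof (intro conjI allI impI)
  show "bounded_linear (\<lambda>v. \<Sum>j\<in>UNIV. v $ j * pdiff j g y)"
    by (intro bounded_linear_sum bounded_linear_intros) (simp add: bounded_linear_vec_nth)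
next
  fix e :: real assume e: "e > 0"
  define e' where "e' = e / (3 * real CARD('m))"
  have e': "e' > 0" using e by (simp add: e'_def)
  have "\<forall>\<^sub>F z in at y. \<forall>j. dist (pdiff j g z) (pdiff j g y) < e'"
  proof (rule eventually_all_finite)
    fix j
    have "isCont (pdiff j g) y"
      using cont[of j] by (simp add: continuous_on_eq_continuous_at)
    then show "\<forall>\<^sub>F z in at y. dist (pdiff j g z) (pdiff j g y) < e'"
      unfolding isCont_def using e' by (rule tendstoD)
  qed
  then obtain d where d: "d > 0" and dd: "\<And>z. z \<noteq> y \<Longrightarrow> dist z y < d \<Longrightarrow> \<forall>j. dist (pdiff j g z) (pdiff j g y) < e'"
    unfolding eventually_at by auto
  show "\<exists>d>0. \<forall>y'. norm (y' - y) < d \<longrightarrow>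
      norm (g y' - g y - (\<Sum>j\<in>UNIV. (y' - y) $ j * pdiff j g y)) \<le> e * norm (y' - y)"
  proof (intro exI[of _ d] conjI allI impI d)
    fix y' assume y': "norm (y' - y) < d"
    define v where "v = y' - y"
    have H: "\<bar>pdiff j g z - pdiff j g y\<bar> \<le> e'" if "norm (z - y) \<le> norm v" for z j
    proof (cases "z = y")
      case True then show ?thesis using e' by simp
    next
      case False
      have "dist z y < d" using that y' by (simp add: dist_norm v_def)
      then have "dist (pdiff j g z) (pdiff j g y) < e'" using dd[OF False] by blast
      then show ?thesis by (simp add: dist_real_def)
    qed
    have "\<bar>g (y + wpart UNIV v) - g y - (\<Sum>j\<in>UNIV. v $ j * pdiff j g y)\<bar> \<le> 3 * e' * (\<Sum>j\<in>UNIV. \<bar>v $ j\<bar>)"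
      by (rule multi_coord_est[OF dg H])
    also have "\<dots> \<le> 3 * e' * (\<Sum>j\<in>(UNIV::'m set). norm v)"
      using e' by (intro mult_left_mono sum_mono) (auto simp: component_le_norm_cart)
    also have "\<dots> = e * norm v" using e by (simp add: e'_def)
    finally show "norm (g y' - g y - (\<Sum>j\<in>UNIV. (y' - y) $ j * pdiff j g y)) \<le> e * norm (y' - y)"
      by (simp add: wpart_UNIV v_def)
  qed
qed




lemma path_deriv:
  fixes P :: "real^'n \<Rightarrow> real^'m"
  assumes P: "poly_map P"
  shows "((\<lambda>t. P (x + t *\<^sub>R axis i 1)) has_derivative (\<lambda>h. h *\<^sub>R (\<chi> j. pdiff i (\<lambda>x. P x $ j) x))) (at 0)"
proof -
  have comp: "((\<lambda>t. P (x + t *\<^sub>R axis i 1) $ j) has_derivative (\<lambda>h. h * pdiff i (\<lambda>x. P x $ j) x)) (at 0)" for j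
  proof -
    have "polyfun (\<lambda>x. P x $ j)" using P by (simp add: poly_map_def)
    from polyfun_pdiff[OF this, of i] have d:
      "((\<lambda>t. P (x + t *\<^sub>R axis i 1) $ j) has_real_derivative pdiff i (\<lambda>x. P x $ j) x) (at 0)"
      by blast
    have eq: "(*) (pdiff i (\<lambda>x. P x $ j) x) = (\<lambda>h. h * pdiff i (\<lambda>x. P x $ j) x)"
      by (auto simp: fun_eq_iff)
    show ?thesis using d unfolding has_field_derivative_def
      by (rule subst[where P="\<lambda>f. ((\<lambda>t. P (x + t *\<^sub>R axis i 1) $ j) has_derivative f) (at 0)", OF eq])
  qed
  show ?thesis
  proof (rule has_derivative_componentwise_within[THEN iffD2], rule ballI)
    fix b :: "real^'m" assume "b \<in> Basis"
    then obtain j where b: "b = axis j 1" unfolding Basis_vec_def by auto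
    have e1: "(\<lambda>h. (h *\<^sub>R (\<chi> k. pdiff i (\<lambda>x. P x $ k) x) :: real^'m) \<bullet> axis j 1) = (\<lambda>h. h * pdiff i (\<lambda>x. P x $ j) x)"
      by (simp add: inner_axis fun_eq_iff)
    have e2: "(\<lambda>t. P (x + t *\<^sub>R axis i 1) \<bullet> axis j 1) = (\<lambda>t. P (x + t *\<^sub>R axis i 1) $ j)"
      by (simp add: inner_axis fun_eq_iff)
    show "((\<lambda>t. P (x + t *\<^sub>R axis i 1) \<bullet> b) has_derivative (\<lambda>h. h *\<^sub>R (\<chi> j. pdiff i (\<lambda>x. P x $ j) x) \<bullet> b)) (at 0)"
      unfolding b e1 e2 by (rule comp)
  qed
qed

lemma chain_line:
  fixes P :: "real^'n \<Rightarrow> real^'m" and g :: "real^'m \<Rightarrow> real"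
  assumes P: "poly_map P"
    and dg: "\<And>j y. ((\<lambda>t. g (y + t *\<^sub>R axis j 1)) has_real_derivative pdiff j g y) (at 0)"
    and cont: "\<And>j. continuous_on UNIV (pdiff j g)"
  shows "((\<lambda>t. g (P (x + t *\<^sub>R axis i 1))) has_real_derivative
           (\<Sum>j\<in>UNIV. pdiff i (\<lambda>x. P x $ j) x * pdiff j g (P x))) (at 0)"
proof -
  have e0: "P (x + 0 *\<^sub>R axis i 1) = P x" by simp
  have gd: "(g has_derivative (\<lambda>v. \<Sum>j\<in>UNIV. v $ j * pdiff j g (P x))) (at (P (x + 0 *\<^sub>R axis i 1)))"
    unfolding e0 by (rule frechet_partials[OF dg cont])
  have d: "((\<lambda>t. g (P (x + t *\<^sub>R axis i 1))) has_derivative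
     (\<lambda>h. \<Sum>j\<in>UNIV. (h *\<^sub>R (\<chi> j. pdiff i (\<lambda>x. P x $ j) x)) $ j * pdiff j g (P x))) (at 0)"
    using has_derivative_compose[OF path_deriv[OF P, of x i] gd] .
  have eq: "(\<lambda>h. \<Sum>j\<in>UNIV. (h *\<^sub>R (\<chi> j. pdiff i (\<lambda>x. P x $ j) x)) $ j * pdiff j g (P x))
     = (*) (\<Sum>j\<in>UNIV. pdiff i (\<lambda>x. P x $ j) x * pdiff j g (P x))"
  proof (rule ext)
    fix h :: real
    have "(\<Sum>j\<in>UNIV. (h *\<^sub>R (\<chi> j. pdiff i (\<lambda>x. P x $ j) x)) $ j * pdiff j g (P x))
        = (\<Sum>j\<in>UNIV. h * (pdiff i (\<lambda>x. P x $ j) x * pdiff j g (P x)))"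
      by (intro sum.cong refl) simp
    also have "\<dots> = h * (\<Sum>j\<in>UNIV. pdiff i (\<lambda>x. P x $ j) x * pdiff j g (P x))"
      by (rule sum_distrib_left[symmetric])
    finally show "(\<Sum>j\<in>UNIV. (h *\<^sub>R (\<chi> j. pdiff i (\<lambda>x. P x $ j) x)) $ j * pdiff j g (P x))
        = (\<Sum>j\<in>UNIV. pdiff i (\<lambda>x. P x $ j) x * pdiff j g (P x)) * h"
      by (simp only: mult.commute)
  qed
  show ?thesis
    unfolding has_field_derivative_def
    by (rule subst[where P="\<lambda>f. ((\<lambda>t. g (P (x + t *\<^sub>R axis i 1))) has_derivative f) (at 0)", OF eq d])
qed



lemma sm_cont: "smooth_fun h \<Longrightarrow> continuous_on UNIV (Dpart is h)"
  by (simp add: smooth_fun_def)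

lemma sm_deriv: "smooth_fun h \<Longrightarrow> ((\<lambda>t. Dpart is h (x + t *\<^sub>R axis i 1)) has_real_derivative Dpart (i # is) h x) (at 0)"
  by (simp add: smooth_fun_def)

lemma sm_chain:
  assumes "smooth_fun h" "poly_map P"
  shows "((\<lambda>t. Dpart \<beta> h (P (x + t *\<^sub>R axis i 1))) has_real_derivative
           (\<Sum>j\<in>UNIV. pdiff i (\<lambda>x. P x $ j) x * Dpart (j # \<beta>) h (P x))) (at 0)"
proof -
  have "((\<lambda>t. Dpart \<beta> h (P (x + t *\<^sub>R axis i 1))) has_real_derivative
           (\<Sum>j\<in>UNIV. pdiff i (\<lambda>x. P x $ j) x * pdiff j (Dpart \<beta> h) (P x))) (at 0)"
  proof (rule chain_line[OF assms(2)])
    show "((\<lambda>t. Dpart \<beta> h (y + t *\<^sub>R axis j 1)) has_real_derivative pdiff j (Dpart \<beta> h) y) (at 0)" for j y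
      using sm_deriv[OF assms(1), of \<beta> y j] by simp
    show "continuous_on UNIV (pdiff j (Dpart \<beta> h))" for j
      using sm_cont[OF assms(1), of "j # \<beta>"] by simp
  qed
  then show ?thesis by simp
qed

definition jl :: "'m::finite list" where
  "jl = (SOME xs. set xs = UNIV \<and> distinct xs)"

lemma jl: "set (jl :: 'm::finite list) = UNIV \<and> distinct (jl :: 'm list)"
  unfolding jl_def by (rule someI_ex) (use finite_distinct_list[of "UNIV :: 'm set"] in auto)

lemma sum_jl: "sum_list (map f (jl :: 'm::finite list)) = (\<Sum>j\<in>UNIV. f j)"
  by (metis jl sum.distinct_set_conv_list)

definition rr :: "(real^'n \<Rightarrow> real^'m) \<Rightarrow> (real^'m \<Rightarrow> real^'n) \<Rightarrow> real^'n \<Rightarrow> real" where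
  "rr P Q x = (\<Sum>i\<in>UNIV. (x $ i - Q (P x) $ i) * (x $ i - Q (P x) $ i))"

definition psi :: "(real^'n \<Rightarrow> real^'m) \<Rightarrow> (real^'m \<Rightarrow> real^'n) \<Rightarrow> real^'n \<Rightarrow> real" where
  "psi P Q x = exp (- rr P Q x)"

definition Tm :: "(real^'n \<Rightarrow> real^'m) \<Rightarrow> (real^'m \<Rightarrow> real^'n) \<Rightarrow> (real^'m \<Rightarrow> real) \<Rightarrow> real^'n \<Rightarrow> real" where
  "Tm P Q h x = h (P x) * psi P Q x"

definition tv :: "(real^'n \<Rightarrow> real^'m) \<Rightarrow> (real^'m \<Rightarrow> real^'n) \<Rightarrow> (real^'n \<Rightarrow> real) \<times> 'm list \<Rightarrow> (real^'m \<Rightarrow> real) \<Rightarrow> real^'n \<Rightarrow> real" where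
  "tv P Q e h x = fst e x * Dpart (snd e) h (P x) * psi P Q x"

definition Tsum where
  "Tsum P Q L h x = sum_list (map (\<lambda>e. tv P Q e h x) L)"

definition step :: "(real^'n \<Rightarrow> real^'m) \<Rightarrow> (real^'m \<Rightarrow> real^'n) \<Rightarrow> 'n \<Rightarrow> (real^'n \<Rightarrow> real) \<times> 'm list \<Rightarrow> ((real^'n \<Rightarrow> real) \<times> 'm list) list" where
  "step P Q i e = [(pdiff i (fst e), snd e)] @
     map (\<lambda>j. (\<lambda>x. fst e x * pdiff i (\<lambda>x. P x $ j) x, j # snd e)) jl @
     [(\<lambda>x. - (fst e x * pdiff i (rr P Q) x), snd e)]"

lemma rr_poly:
  assumes "poly_map P" "poly_map Q"
  shows "polyfun (rr P Q)"
proof -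
  have "polyfun (\<lambda>x. Q (P x) $ i)" for i
    using polyfun_comp[of "\<lambda>y. Q y $ i" P] assms by (simp add: poly_map_def)
  then have "polyfun (\<lambda>x. x $ i - Q (P x) $ i)" for i
    by (intro polyfun_diff polyfun.pf_coord)
  then show ?thesis unfolding rr_def[abs_def]
    by (intro polyfun_sum polyfun.pf_mult) auto
qed

lemma psi_deriv:
  assumes "poly_map P" "poly_map Q"
  shows "((\<lambda>t. psi P Q (x + t *\<^sub>R axis i 1)) has_real_derivative psi P Q x * (- pdiff i (rr P Q) x)) (at 0)"
proof -
  have "((\<lambda>t. rr P Q (x + t *\<^sub>R axis i 1)) has_real_derivative pdiff i (rr P Q) x) (at 0)"
    using polyfun_pdiff[OF rr_poly[OF assms]] by blast
  from DERIV_chain2[OF DERIV_exp DERIV_minus[OF this]]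
  show ?thesis unfolding psi_def by simp
qed

lemma tv_deriv:
  assumes P: "poly_map P" and Q: "poly_map Q" and c: "polyfun (fst e)" and h: "smooth_fun h"
  shows "((\<lambda>t. tv P Q e h (x + t *\<^sub>R axis i 1)) has_real_derivative Tsum P Q (step P Q i e) h x) (at 0)"
proof -
  obtain c \<beta> where e: "e = (c, \<beta>)" by fastforce
  have dc: "((\<lambda>t. c (x + t *\<^sub>R axis i 1)) has_real_derivative pdiff i c x) (at 0)"
    using polyfun_pdiff[of c i] c e by auto
  have dD: "((\<lambda>t. Dpart \<beta> h (P (x + t *\<^sub>R axis i 1))) has_real_derivative
           (\<Sum>j\<in>UNIV. pdiff i (\<lambda>x. P x $ j) x * Dpart (j # \<beta>) h (P x))) (at 0)"
    by (rule sm_chain[OF h P])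
  have dp: "((\<lambda>t. psi P Q (x + t *\<^sub>R axis i 1)) has_real_derivative psi P Q x * (- pdiff i (rr P Q) x)) (at 0)"
    by (rule psi_deriv[OF P Q])
  have "((\<lambda>t. c (x + t *\<^sub>R axis i 1) * Dpart \<beta> h (P (x + t *\<^sub>R axis i 1)) * psi P Q (x + t *\<^sub>R axis i 1)) has_real_derivative
     (pdiff i c x * Dpart \<beta> h (P x) + (\<Sum>j\<in>UNIV. pdiff i (\<lambda>x. P x $ j) x * Dpart (j # \<beta>) h (P x)) * c x) * psi P Q x
     + psi P Q x * (- pdiff i (rr P Q) x) * (c x * Dpart \<beta> h (P x))) (at 0)"
    using DERIV_mult[OF DERIV_mult[OF dc dD] dp] by simp
  moreover have "Tsum P Q (step P Q i e) h x =
     (pdiff i c x * Dpart \<beta> h (P x) + (\<Sum>j\<in>UNIV. pdiff i (\<lambda>x. P x $ j) x * Dpart (j # \<beta>) h (P x)) * c x) * psi P Q x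
     + psi P Q x * (- pdiff i (rr P Q) x) * (c x * Dpart \<beta> h (P x))"
    by (simp add: Tsum_def step_def e tv_def sum_jl algebra_simps sum_distrib_left sum_distrib_right)
  ultimately show ?thesis by (simp add: tv_def e)
qed

lemma Tsum_append: "Tsum P Q (A @ B) h x = Tsum P Q A h x + Tsum P Q B h x"
  by (simp add: Tsum_def)

lemma Tsum_Cons: "Tsum P Q (e # B) h x = tv P Q e h x + Tsum P Q B h x"
  by (simp add: Tsum_def)

lemma Tsum_Nil: "Tsum P Q [] h x = 0"
  by (simp add: Tsum_def)

lemma Tsum_deriv:
  assumes P: "poly_map P" and Q: "poly_map Q" and h: "smooth_fun h"
    and L: "\<forall>e\<in>set L. polyfun (fst e)"
  shows "((\<lambda>t. Tsum P Q L h (x + t *\<^sub>R axis i 1)) has_real_derivative Tsum P Q (concat (map (step P Q i) L)) h x) (at 0)"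
  using L
proof (induction L)
  case Nil
  then show ?case by (simp add: Tsum_Nil)
next
  case (Cons e L)
  have "((\<lambda>t. tv P Q e h (x + t *\<^sub>R axis i 1) + Tsum P Q L h (x + t *\<^sub>R axis i 1)) has_real_derivative
     Tsum P Q (step P Q i e) h x + Tsum P Q (concat (map (step P Q i) L)) h x) (at 0)"
    using Cons by (intro DERIV_add tv_deriv[OF P Q _ h]) auto
  then show ?case by (simp add: Tsum_Cons Tsum_append)
qed

lemma step_props:
  assumes P: "poly_map P" and Q: "poly_map Q"
    and L: "\<forall>e\<in>set L. polyfun (fst e) \<and> length (snd e) \<le> k"
  shows "\<forall>e\<in>set (concat (map (step P Q i) L)). polyfun (fst e) \<and> length (snd e) \<le> Suc k"
proof
  fix e' assume "e' \<in> set (concat (map (step P Q i) L))"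
  then obtain e where e: "e \<in> set L" and e': "e' \<in> set (step P Q i e)" by auto
  have c: "polyfun (fst e)" and l: "length (snd e) \<le> k" using L e by auto
  have r: "polyfun (pdiff i (rr P Q))" using polyfun_pdiff[OF rr_poly[OF P Q]] by blast
  have pj: "polyfun (pdiff i (\<lambda>x. P x $ j))" for j
    using polyfun_pdiff[of "\<lambda>x. P x $ j" i] P by (auto simp: poly_map_def)
  show "polyfun (fst e') \<and> length (snd e') \<le> Suc k"
    using e' c l r pj polyfun_pdiff[OF c, of i]
    by (auto simp: step_def intro!: polyfun.pf_mult polyfun_neg)
qed

lemma Tm_rep:
  assumes P: "poly_map P" and Q: "poly_map Q"
  shows "\<exists>L. (\<forall>e\<in>set L. polyfun (fst e) \<and> length (snd e) \<le> length is) \<and>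
     (\<forall>h. smooth_fun h \<longrightarrow> Dpart is (Tm P Q h) = Tsum P Q L h)"
proof (induction "is")
  case Nil
  show ?case
    by (rule exI[of _ "[(\<lambda>x. 1, [])]"]) (auto simp: Tsum_def tv_def Tm_def fun_eq_iff intro: polyfun.pf_const)
next
  case (Cons i "is")
  then obtain L where L: "\<forall>e\<in>set L. polyfun (fst e) \<and> length (snd e) \<le> length is"
    and eq: "\<And>h. smooth_fun h \<Longrightarrow> Dpart is (Tm P Q h) = Tsum P Q L h" by blast
  show ?case
  proof (intro exI conjI allI impI)
    show "\<forall>e\<in>set (concat (map (step P Q i) L)). polyfun (fst e) \<and> length (snd e) \<le> length (i # is)"
      using step_props[OF P Q L] by simp
    fix h :: "real^'b \<Rightarrow> real" assume h: "smooth_fun h"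
    show "Dpart (i # is) (Tm P Q h) = Tsum P Q (concat (map (step P Q i) L)) h"
    proof (rule ext)
      fix x
      have "((\<lambda>t. Tsum P Q L h (x + t *\<^sub>R axis i 1)) has_real_derivative Tsum P Q (concat (map (step P Q i) L)) h x) (at 0)"
        using L by (intro Tsum_deriv[OF P Q h]) auto
      then show "Dpart (i # is) (Tm P Q h) x = Tsum P Q (concat (map (step P Q i) L)) h x"
        by (simp add: eq[OF h] pdiff_def DERIV_imp_deriv)
    qed
  qed
qed

lemma polymap_cont: "poly_map P \<Longrightarrow> continuous_on UNIV P"
proof -
  assume "poly_map P"
  then have "continuous_on UNIV (\<lambda>x. \<chi> j. P x $ j)"
    by (intro continuous_on_vec_lambda) (auto simp: poly_map_def intro: polyfun_cont)
  then show ?thesis by simp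
qed

lemma Tsum_cont:
  assumes P: "poly_map P" and Q: "poly_map Q" and h: "smooth_fun h"
    and L: "\<forall>e\<in>set L. polyfun (fst e)"
  shows "continuous_on UNIV (Tsum P Q L h)"
  using L
proof (induction L)
  case Nil
  then show ?case by (simp add: Tsum_Nil[abs_def])
next
  case (Cons e L)
  have pc: "continuous_on UNIV (psi P Q)"
    unfolding psi_def[abs_def] by (intro continuous_intros polyfun_cont rr_poly P Q)
  have dc: "continuous_on UNIV (\<lambda>x. Dpart (snd e) h (P x))"
    using continuous_on_compose[OF polymap_cont[OF P], of "Dpart (snd e) h"]
      continuous_on_subset[OF sm_cont[OF h, of "snd e"], of "range P"]
    by (simp add: o_def)
  have "continuous_on UNIV (\<lambda>x. tv P Q e h x + Tsum P Q L h x)"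
    unfolding tv_def using Cons pc dc
    by (intro continuous_intros) (auto intro: polyfun_cont)
  then show ?case by (simp add: Tsum_Cons[abs_def])
qed

lemma Tm_smooth:
  assumes P: "poly_map P" and Q: "poly_map Q" and h: "smooth_fun h"
  shows "smooth_fun (Tm P Q h)"
  unfolding smooth_fun_def
proof (intro allI conjI)
  fix "is"
  obtain L where L: "\<forall>e\<in>set L. polyfun (fst e) \<and> length (snd e) \<le> length is"
    and eq: "\<And>h. smooth_fun h \<Longrightarrow> Dpart is (Tm P Q h) = Tsum P Q L h"
    using Tm_rep[OF P Q, of "is"] by blast
  show "continuous_on UNIV (Dpart is (Tm P Q h))"
    unfolding eq[OF h] using L by (intro Tsum_cont[OF P Q h]) auto
  fix i x
  obtain L' where eq': "\<And>h. smooth_fun h \<Longrightarrow> Dpart (i # is) (Tm P Q h) = Tsum P Q L' h"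
    and "L' = concat (map (step P Q i) L)"
  proof -
    have "Dpart (i # is) (Tm P Q h) = Tsum P Q (concat (map (step P Q i) L)) h"
      if "smooth_fun h" for h
    proof (rule ext)
      fix x
      have "((\<lambda>t. Tsum P Q L h (x + t *\<^sub>R axis i 1)) has_real_derivative Tsum P Q (concat (map (step P Q i) L)) h x) (at 0)"
        using L by (intro Tsum_deriv[OF P Q that]) auto
      then show "Dpart (i # is) (Tm P Q h) x = Tsum P Q (concat (map (step P Q i) L)) h x"
        by (simp add: eq[OF that] pdiff_def DERIV_imp_deriv)
    qed
    then show ?thesis using that by blast
  qed
  have "((\<lambda>t. Tsum P Q L h (x + t *\<^sub>R axis i 1)) has_real_derivative Tsum P Q (concat (map (step P Q i) L)) h x) (at 0)"
    using L by (intro Tsum_deriv[OF P Q h]) auto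
  then show "((\<lambda>t. Dpart is (Tm P Q h) (x + t *\<^sub>R axis i 1)) has_real_derivative pdiff i (Dpart is (Tm P Q h)) x) (at 0)"
    using eq'[OF h] \<open>L' = _\<close> by (simp add: eq[OF h])
qed



lemma pow_sum_le:
  fixes a b :: real
  assumes "a \<ge> 0" "b \<ge> 0"
  shows "(a + b) ^ L \<le> 2 ^ L * (a ^ L + b ^ L)"
proof -
  have "(a + b) ^ L \<le> (2 * max a b) ^ L"
    using assms by (intro power_mono) auto
  also have "\<dots> = 2 ^ L * max a b ^ L" by (simp add: power_mult_distrib)
  also have "max a b ^ L \<le> a ^ L + b ^ L"
    using assms by (cases "a \<le> b") (auto simp: max_def)
  then have "2 ^ L * max a b ^ L \<le> 2 ^ L * (a ^ L + b ^ L)" by simp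
  finally show ?thesis .
qed

lemma pow_sumset_le:
  fixes u :: "'a \<Rightarrow> real"
  assumes "finite S" "\<And>i. i \<in> S \<Longrightarrow> u i \<ge> 0"
  shows "(1 + (\<Sum>i\<in>S. u i)) ^ L \<le> 2 ^ (L * card S) * (1 + (\<Sum>i\<in>S. u i ^ L))"
  using assms
proof (induction S rule: finite_induct)
  case empty
  then show ?case by simp
next
  case (insert k S)
  have s0: "(\<Sum>i\<in>S. u i) \<ge> 0" "(\<Sum>i\<in>S. u i ^ L) \<ge> 0" using insert by (auto intro!: sum_nonneg)
  have uk: "u k \<ge> 0" using insert by auto
  have IH: "(1 + (\<Sum>i\<in>S. u i)) ^ L \<le> 2 ^ (L * card S) * (1 + (\<Sum>i\<in>S. u i ^ L))"
    using insert by auto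
  have "(1 + (\<Sum>i\<in>insert k S. u i)) ^ L = ((1 + (\<Sum>i\<in>S. u i)) + u k) ^ L"
    using insert by (simp add: algebra_simps)
  also have "\<dots> \<le> 2 ^ L * ((1 + (\<Sum>i\<in>S. u i)) ^ L + u k ^ L)"
    using s0 uk by (intro pow_sum_le) auto
  also have "\<dots> \<le> 2 ^ L * (2 ^ (L * card S) * (1 + (\<Sum>i\<in>S. u i ^ L)) + 2 ^ (L * card S) * u k ^ L)"
  proof -
    have "u k ^ L \<le> 2 ^ (L * card S) * u k ^ L"
      using uk by (simp add: mult_le_cancel_right1 one_le_power)
    then show ?thesis using IH by (intro mult_left_mono add_mono) auto
  qed
  also have "\<dots> = 2 ^ (L * card (insert k S)) * (1 + (\<Sum>i\<in>insert k S. u i ^ L))"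
    using insert by (simp add: algebra_simps power_add)
  finally show ?case .
qed

lemma monom_single: "monom (\<lambda>k. if k = i then L else 0) y = (y $ i) ^ L"
proof -
  have "monom (\<lambda>k. if k = i then L else 0) y = (\<Prod>k\<in>UNIV. if k = i then (y $ k) ^ L else 1)"
    unfolding monom_def by (intro prod.cong) auto
  then show ?thesis by simp
qed

lemma monom_zero: "monom (\<lambda>k. 0) y = 1"
  by (simp add: monom_def)

lemma sum_single: "sum (\<lambda>k. if k = (i::'a::finite) then L else 0) UNIV = L"
  by simp

lemma sw_pt:
  assumes "h \<in> schwartz"
  shows "\<bar>monom \<alpha> y * Dpart \<gamma> h y\<bar> \<le> sw_seminorm \<alpha> \<gamma> h"
proof -
  have "bounded (range (\<lambda>x. monom \<alpha> x * Dpart \<gamma> h x))"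
    using assms by (simp add: schwartz_def)
  then obtain B where B: "\<And>x. \<bar>monom \<alpha> x * Dpart \<gamma> h x\<bar> \<le> B"
    unfolding bounded_iff by auto
  have "bdd_above (range (\<lambda>x. \<bar>monom \<alpha> x * Dpart \<gamma> h x\<bar>))"
    using B by (intro bdd_aboveI2) auto
  then show ?thesis unfolding sw_seminorm_def by (rule cSUP_upper[OF UNIV_I])
qed

definition semis_le :: "nat \<Rightarrow> real \<Rightarrow> (real^'m \<Rightarrow> real) \<Rightarrow> bool" where
  "semis_le N \<delta> h \<longleftrightarrow> (\<forall>\<beta> \<gamma>. sum \<beta> UNIV \<le> N \<longrightarrow> length \<gamma> \<le> N \<longrightarrow> sw_seminorm \<beta> \<gamma> h \<le> \<delta>)"

lemma semis_le_mono: "semis_le N \<delta> h \<Longrightarrow> N' \<le> N \<Longrightarrow> semis_le N' \<delta> h"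
  by (auto simp: semis_le_def)

lemma weight_bound:
  fixes h :: "real^'m \<Rightarrow> real"
  assumes h: "h \<in> schwartz" and H: "semis_le N \<delta> h" and LN: "L \<le> N" and gN: "length \<gamma> \<le> N"
  shows "(1 + norm y) ^ L * \<bar>Dpart \<gamma> h y\<bar> \<le> 2 ^ (L * CARD('m)) * (1 + real CARD('m)) * \<delta>"
proof -
  let ?D = "\<bar>Dpart \<gamma> h y\<bar>"
  have D0: "?D \<le> \<delta>"
  proof -
    have "?D = \<bar>monom (\<lambda>k. 0) y * Dpart \<gamma> h y\<bar>" by (simp add: monom_zero)
    also have "\<dots> \<le> sw_seminorm (\<lambda>k. 0) \<gamma> h" by (rule sw_pt[OF h])
    also have "\<dots> \<le> \<delta>" using H gN by (auto simp: semis_le_def)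
    finally show ?thesis .
  qed
  have Di: "\<bar>y $ i\<bar> ^ L * ?D \<le> \<delta>" for i
  proof -
    have "\<bar>y $ i\<bar> ^ L * ?D = \<bar>monom (\<lambda>k. if k = i then L else 0) y * Dpart \<gamma> h y\<bar>"
      by (simp add: monom_single abs_mult power_abs)
    also have "\<dots> \<le> sw_seminorm (\<lambda>k. if k = i then L else 0) \<gamma> h" by (rule sw_pt[OF h])
    also have "\<dots> \<le> \<delta>" using H gN LN unfolding semis_le_def by (metis sum_single)
    finally show ?thesis .
  qed
  have "(1 + norm y) ^ L \<le> (1 + (\<Sum>i\<in>UNIV. \<bar>y $ i\<bar>)) ^ L"
    by (intro power_mono) (auto simp: norm_le_l1_cart)
  also have "\<dots> \<le> 2 ^ (L * CARD('m)) * (1 + (\<Sum>i\<in>UNIV. \<bar>y $ i\<bar> ^ L))"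
    by (rule pow_sumset_le) auto
  finally have w: "(1 + norm y) ^ L * ?D \<le> 2 ^ (L * CARD('m)) * (1 + (\<Sum>i\<in>UNIV. \<bar>y $ i\<bar> ^ L)) * ?D"
    by (simp add: mult_right_mono)
  also have "\<dots> = 2 ^ (L * CARD('m)) * (?D + (\<Sum>i\<in>UNIV. \<bar>y $ i\<bar> ^ L * ?D))"
    by (simp add: algebra_simps sum_distrib_right sum_distrib_left)
  also have "\<dots> \<le> 2 ^ (L * CARD('m)) * (\<delta> + (\<Sum>i\<in>(UNIV::'m set). \<delta>))"
    using D0 Di by (intro mult_left_mono add_mono sum_mono) auto
  also have "\<dots> = 2 ^ (L * CARD('m)) * (1 + real CARD('m)) * \<delta>"
    by (simp add: algebra_simps)
  finally show ?thesis .
qed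

lemma exp_poly_bound:
  fixes a :: real
  assumes "a \<ge> 0"
  shows "(1 + a) ^ K * exp (- (a * a)) \<le> exp (real K * real K / 4)"
proof -
  have "(1 + a) ^ K \<le> exp a ^ K"
    using assms by (intro power_mono) (auto simp: exp_ge_add_one_self)
  also have "\<dots> = exp (real K * a)" by (simp add: exp_of_nat_mult)
  finally have "(1 + a) ^ K * exp (- (a * a)) \<le> exp (real K * a) * exp (- (a * a))"
    by (simp add: mult_right_mono)
  also have "\<dots> = exp (real K * a - a * a)" by (simp add: exp_diff exp_minus field_simps)
  also have "\<dots> \<le> exp (real K * real K / 4)"
  proof -
    have "0 \<le> (a - real K / 2) * (a - real K / 2)" by simp
    then have "real K * a - a * a \<le> real K * real K / 4" by (simp add: algebra_simps)
    then show ?thesis by simp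
  qed
  finally show ?thesis .
qed

lemma rr_norm: "rr P Q x = norm (x - Q (P x)) * norm (x - Q (P x))"
proof -
  have "norm (x - Q (P x)) * norm (x - Q (P x)) = (x - Q (P x)) \<bullet> (x - Q (P x))"
    by (simp add: power2_norm_eq_inner[symmetric] power2_eq_square)
  also have "\<dots> = rr P Q x" by (simp add: inner_vec_def rr_def)
  finally show ?thesis by simp
qed

lemma polyfun_power: "polyfun f \<Longrightarrow> polyfun (\<lambda>x. f x ^ n)"
  by (induction n) (auto intro: polyfun.intros)

lemma polyfun_prod: "finite S \<Longrightarrow> (\<And>i. i \<in> S \<Longrightarrow> polyfun (f i)) \<Longrightarrow> polyfun (\<lambda>x. \<Prod>i\<in>S. f i x)"
  by (induction rule: finite_induct) (auto intro: polyfun.intros)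

lemma polyfun_monom: "polyfun (monom \<alpha>)"
  unfolding monom_def[abs_def]
  by (intro polyfun_prod polyfun_power polyfun.pf_coord) auto



lemma tv_bound:
  fixes P :: "real^'n \<Rightarrow> real^'m" and Q :: "real^'m \<Rightarrow> real^'n"
  assumes P: "poly_map P" and Q: "poly_map Q" and c: "polyfun c"
  shows "\<exists>N C. C \<ge> 0 \<and> (\<forall>h \<delta> x. h \<in> schwartz \<longrightarrow> semis_le N \<delta> h \<longrightarrow>
            \<bar>monom \<alpha> x * tv P Q (c, \<beta>) h x\<bar> \<le> C * \<delta>)"
proof -
  have "polyfun (\<lambda>x. monom \<alpha> x * c x)" by (intro polyfun.pf_mult polyfun_monom c)
  from polyfun_growth[OF this] obtain Cp K where Cp: "Cp \<ge> 0"
    and gp: "\<And>x. \<bar>monom \<alpha> x * c x\<bar> \<le> Cp * (1 + norm x) ^ K" by blast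
  from polymap_growth[OF Q] obtain CQ d where CQ: "CQ \<ge> 0"
    and gq: "\<And>y. norm (Q y) \<le> CQ * (1 + norm y) ^ d" by blast
  define W where "W = 2 ^ (d * K * CARD('m)) * (1 + real CARD('m))"
  define N where "N = d * K + length \<beta>"
  define C where "C = Cp * (1 + CQ) ^ K * exp (real K * real K / 4) * W"
  show ?thesis
  proof (intro exI conjI allI impI)
    show "C \<ge> 0" unfolding C_def W_def using Cp CQ by simp
    fix h :: "real^'m \<Rightarrow> real" and \<delta> x
    assume h: "h \<in> schwartz" and H: "semis_le N \<delta> h"
    define a where "a = norm (x - Q (P x))"
    define b where "b = 1 + norm (P x)"
    define B where "B = b ^ d"
    have a0: "a \<ge> 0" unfolding a_def by simp
    have b1: "b \<ge> 1" unfolding b_def by simp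
    have B1: "B \<ge> 1" unfolding B_def using b1 by (simp add: one_le_power)
    have nx1: "norm x \<le> norm (Q (P x)) + a" unfolding a_def by (rule norm_triangle_sub)
    have nQ: "norm (Q (P x)) \<le> CQ * B" unfolding B_def b_def by (rule gq)
    have t1: "(1 + a) * B \<ge> 1 + a" using B1 a0 by (simp add: mult_le_cancel_left1)
    have t0: "a * CQ * B \<ge> 0" using a0 CQ B1 by simp
    have t2: "(1 + a) * CQ * B \<ge> CQ * B" using t0 by (simp add: algebra_simps)
    have nx: "1 + norm x \<le> (1 + a) * ((1 + CQ) * B)"
      using nx1 nQ t1 t2 by (simp add: algebra_simps)
    have pp: "\<bar>monom \<alpha> x * c x\<bar> \<le> Cp * ((1 + a) ^ K * ((1 + CQ) ^ K * b ^ (d * K)))"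
    proof -
      have "\<bar>monom \<alpha> x * c x\<bar> \<le> Cp * (1 + norm x) ^ K" by (rule gp)
      also have "\<dots> \<le> Cp * ((1 + a) * ((1 + CQ) * B)) ^ K"
        using nx Cp by (intro mult_left_mono power_mono) auto
      also have "\<dots> = Cp * ((1 + a) ^ K * ((1 + CQ) ^ K * b ^ (d * K)))"
        by (simp add: B_def power_mult_distrib power_mult[symmetric])
      finally show ?thesis .
    qed
    have ps: "psi P Q x = exp (- (a * a))" by (simp add: psi_def rr_norm a_def)
    have ex: "(1 + a) ^ K * psi P Q x \<le> exp (real K * real K / 4)"
      unfolding ps by (rule exp_poly_bound[OF a0])
    have wb: "b ^ (d * K) * \<bar>Dpart \<beta> h (P x)\<bar> \<le> W * \<delta>"
      unfolding b_def W_def by (rule weight_bound[OF h H]) (auto simp: N_def)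
    have "\<bar>monom \<alpha> x * tv P Q (c, \<beta>) h x\<bar> = \<bar>monom \<alpha> x * c x\<bar> * \<bar>Dpart \<beta> h (P x)\<bar> * psi P Q x"
      by (simp add: tv_def abs_mult psi_def mult.assoc)
    also have "\<dots> \<le> Cp * ((1 + a) ^ K * ((1 + CQ) ^ K * b ^ (d * K))) * \<bar>Dpart \<beta> h (P x)\<bar> * psi P Q x"
      using pp by (intro mult_right_mono) (auto simp: psi_def)
    also have "\<dots> = Cp * (1 + CQ) ^ K * (((1 + a) ^ K * psi P Q x) * (b ^ (d * K) * \<bar>Dpart \<beta> h (P x)\<bar>))"
      by (simp add: mult_ac)
    also have "\<dots> \<le> Cp * (1 + CQ) ^ K * (exp (real K * real K / 4) * (W * \<delta>))"
    proof (rule mult_left_mono)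
      show "(1 + a) ^ K * psi P Q x * (b ^ (d * K) * \<bar>Dpart \<beta> h (P x)\<bar>) \<le> exp (real K * real K / 4) * (W * \<delta>)"
        using a0 b1 by (intro mult_mono[OF ex wb]) (auto simp: psi_def)
    qed (use Cp CQ in simp)
    also have "\<dots> = C * \<delta>" by (simp add: C_def mult_ac)
    finally show "\<bar>monom \<alpha> x * tv P Q (c, \<beta>) h x\<bar> \<le> C * \<delta>" .
  qed
qed

lemma sw_nonneg: "h \<in> schwartz \<Longrightarrow> sw_seminorm \<alpha> \<gamma> h \<ge> 0"
  using sw_pt[of h \<alpha> 0 \<gamma>] by linarith

lemma semis_le_nonneg:
  fixes h :: "real^'m \<Rightarrow> real"
  assumes h: "h \<in> schwartz" and H: "semis_le N \<delta> h"
  shows "\<delta> \<ge> 0"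
proof -
  have s: "sum (\<lambda>k::'m. 0::nat) UNIV \<le> N" "length ([]::'m list) \<le> N" by simp_all
  have "sw_seminorm (\<lambda>k::'m. 0::nat) [] h \<le> \<delta>"
    using H[unfolded semis_le_def, rule_format, OF s] .
  then show ?thesis using sw_nonneg[OF h, of "\<lambda>k. 0" "[]"] by linarith
qed

lemma Tsum_bound:
  fixes P :: "real^'n \<Rightarrow> real^'m" and Q :: "real^'m \<Rightarrow> real^'n"
  assumes P: "poly_map P" and Q: "poly_map Q" and L: "\<forall>e\<in>set L. polyfun (fst e)"
  shows "\<exists>N C. C \<ge> 0 \<and> (\<forall>h \<delta> x. h \<in> schwartz \<longrightarrow> semis_le N \<delta> h \<longrightarrow>
            \<bar>monom \<alpha> x * Tsum P Q L h x\<bar> \<le> C * \<delta>)"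
  using L
proof (induction L)
  case Nil
  show ?case by (rule exI[of _ 0], rule exI[of _ 0]) (auto simp: Tsum_Nil intro: semis_le_nonneg)
next
  case (Cons e L)
  obtain c \<beta> where e: "e = (c, \<beta>)" by fastforce
  have "polyfun c" using Cons e by auto
  from tv_bound[OF P Q this, of \<alpha> \<beta>] obtain N1 C1 where C1: "C1 \<ge> 0" and
    b1: "\<And>h \<delta> x. h \<in> schwartz \<Longrightarrow> semis_le N1 \<delta> h \<Longrightarrow> \<bar>monom \<alpha> x * tv P Q (c, \<beta>) h x\<bar> \<le> C1 * \<delta>"
    by blast
  have "\<exists>N C. C \<ge> 0 \<and> (\<forall>h \<delta> x. h \<in> schwartz \<longrightarrow> semis_le N \<delta> h \<longrightarrow>
            \<bar>monom \<alpha> x * Tsum P Q L h x\<bar> \<le> C * \<delta>)"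
    by (rule Cons.IH) (use Cons.prems in auto)
  then obtain N2 C2 where C2: "C2 \<ge> 0" and
    b2: "\<And>h \<delta> x. h \<in> schwartz \<Longrightarrow> semis_le N2 \<delta> h \<Longrightarrow> \<bar>monom \<alpha> x * Tsum P Q L h x\<bar> \<le> C2 * \<delta>"
    by blast
  show ?case
  proof (intro exI[of _ "N1 + N2"] exI[of _ "C1 + C2"] conjI allI impI)
    show "C1 + C2 \<ge> 0" using C1 C2 by simp
    fix h :: "real^'m \<Rightarrow> real" and \<delta> x assume h: "h \<in> schwartz" and H: "semis_le (N1 + N2) \<delta> h"
    have H1: "semis_le N1 \<delta> h" and H2: "semis_le N2 \<delta> h" using H by (auto elim: semis_le_mono)
    have "\<bar>monom \<alpha> x * Tsum P Q (e # L) h x\<bar> \<le> \<bar>monom \<alpha> x * tv P Q (c, \<beta>) h x\<bar> + \<bar>monom \<alpha> x * Tsum P Q L h x\<bar>"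
      by (simp add: Tsum_Cons e distrib_left)
    also have "\<dots> \<le> C1 * \<delta> + C2 * \<delta>" using b1[OF h H1, of x] b2[OF h H2, of x] by (rule add_mono)
    finally show "\<bar>monom \<alpha> x * Tsum P Q (e # L) h x\<bar> \<le> (C1 + C2) * \<delta>" by (simp add: distrib_right)
  qed
qed

lemma schwartz_smooth: "h \<in> schwartz \<Longrightarrow> smooth_fun h"
  by (simp add: schwartz_def)

lemma core_bound:
  fixes P :: "real^'n \<Rightarrow> real^'m" and Q :: "real^'m \<Rightarrow> real^'n"
  assumes P: "poly_map P" and Q: "poly_map Q"
  shows "\<exists>N C. C \<ge> 0 \<and> (\<forall>h \<delta> x. h \<in> schwartz \<longrightarrow> semis_le N \<delta> h \<longrightarrow>
            \<bar>monom \<alpha> x * Dpart is (Tm P Q h) x\<bar> \<le> C * \<delta>)"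
proof -
  obtain L where L: "\<forall>e\<in>set L. polyfun (fst e) \<and> length (snd e) \<le> length is"
    and eq: "\<And>h. smooth_fun h \<Longrightarrow> Dpart is (Tm P Q h) = Tsum P Q L h"
    using Tm_rep[OF P Q, of "is"] by blast
  have "\<forall>e\<in>set L. polyfun (fst e)" using L by auto
  from Tsum_bound[OF P Q this, of \<alpha>] obtain N C where "C \<ge> 0"
    "\<And>h \<delta> x. h \<in> schwartz \<Longrightarrow> semis_le N \<delta> h \<Longrightarrow> \<bar>monom \<alpha> x * Tsum P Q L h x\<bar> \<le> C * \<delta>"
    by blast
  then show ?thesis using eq schwartz_smooth by metis
qed

lemma fin_idx: "finite {(\<beta>::'m::finite \<Rightarrow> nat, \<gamma>::'m list). sum \<beta> UNIV \<le> N \<and> length \<gamma> \<le> N}"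
proof -
  have f1: "finite {\<beta>::'m \<Rightarrow> nat. \<forall>k. \<beta> k \<le> N}"
  proof -
    have "{\<beta>::'m \<Rightarrow> nat. \<forall>k. \<beta> k \<le> N} = (\<Pi>\<^sub>E k\<in>UNIV. {..N})" by (auto simp: PiE_def Pi_def)
    then show ?thesis by (simp add: finite_PiE)
  qed
  have f2: "finite {\<gamma>::'m list. set \<gamma> \<subseteq> UNIV \<and> length \<gamma> \<le> N}"
    by (rule finite_lists_length_le) simp
  have "{(\<beta>::'m \<Rightarrow> nat, \<gamma>::'m list). sum \<beta> UNIV \<le> N \<and> length \<gamma> \<le> N} \<subseteq>
      {\<beta>::'m \<Rightarrow> nat. \<forall>k. \<beta> k \<le> N} \<times> {\<gamma>::'m list. set \<gamma> \<subseteq> UNIV \<and> length \<gamma> \<le> N}"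
  proof clarsimp
    fix \<beta> :: "'m \<Rightarrow> nat" and k assume "sum \<beta> UNIV \<le> N"
    moreover have "\<beta> k \<le> sum \<beta> UNIV" by (rule member_le_sum) auto
    ultimately show "\<beta> k \<le> N" by simp
  qed
  then show ?thesis using f1 f2 by (rule finite_subset[OF _ finite_cartesian_product])
qed

lemma semis_le_exists:
  fixes h :: "real^'m \<Rightarrow> real"
  assumes h: "h \<in> schwartz"
  shows "\<exists>\<delta>. semis_le N \<delta> h"
proof -
  let ?S = "{(\<beta>::'m \<Rightarrow> nat, \<gamma>::'m list). sum \<beta> UNIV \<le> N \<and> length \<gamma> \<le> N}"
  have "semis_le N (\<Sum>p\<in>?S. sw_seminorm (fst p) (snd p) h) h"
    unfolding semis_le_def
  proof (intro allI impI)
    fix \<beta> :: "'m \<Rightarrow> nat" and \<gamma> :: "'m list"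
    assume "sum \<beta> UNIV \<le> N" "length \<gamma> \<le> N"
    then have "(\<beta>, \<gamma>) \<in> ?S" by simp
    then show "sw_seminorm \<beta> \<gamma> h \<le> (\<Sum>p\<in>?S. sw_seminorm (fst p) (snd p) h)"
      using member_le_sum[of "(\<beta>, \<gamma>)" ?S "\<lambda>p. sw_seminorm (fst p) (snd p) h"] fin_idx sw_nonneg[OF h]
      by auto
  qed
  then show ?thesis ..
qed



lemma uniform_bound:
  fixes P :: "real^'n \<Rightarrow> real^'m" and Q :: "real^'m \<Rightarrow> real^'n"
  assumes P: "poly_map P" and Q: "poly_map Q"
  shows "\<exists>N C. C \<ge> 0 \<and> (\<forall>\<alpha> is h \<delta> x. sum \<alpha> UNIV \<le> K \<longrightarrow> length is \<le> K \<longrightarrow> h \<in> schwartz \<longrightarrow>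
            semis_le N \<delta> h \<longrightarrow> \<bar>monom \<alpha> x * Dpart is (Tm P Q h) x\<bar> \<le> C * \<delta>)"
proof -
  define S where "S = {(\<alpha>::'n \<Rightarrow> nat, is::'n list). sum \<alpha> UNIV \<le> K \<and> length is \<le> K}"
  have fS: "finite S" unfolding S_def by (rule fin_idx)
  have "\<forall>p\<in>S. \<exists>NC::nat \<times> real. snd NC \<ge> 0 \<and> (\<forall>h \<delta> x. h \<in> schwartz \<longrightarrow> semis_le (fst NC) \<delta> h \<longrightarrow>
            \<bar>monom (fst p) x * Dpart (snd p) (Tm P Q h) x\<bar> \<le> snd NC * \<delta>)"
  proof
    fix p :: "('n \<Rightarrow> nat) \<times> 'n list"
    from core_bound[OF P Q, of "fst p" "snd p"] obtain N C where "C \<ge> 0" and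
      "\<forall>h \<delta> x. h \<in> schwartz \<longrightarrow> semis_le N \<delta> h \<longrightarrow>
            \<bar>monom (fst p) x * Dpart (snd p) (Tm P Q h) x\<bar> \<le> C * \<delta>" by blast
    then show "\<exists>NC::nat \<times> real. snd NC \<ge> 0 \<and> (\<forall>h \<delta> x. h \<in> schwartz \<longrightarrow> semis_le (fst NC) \<delta> h \<longrightarrow>
            \<bar>monom (fst p) x * Dpart (snd p) (Tm P Q h) x\<bar> \<le> snd NC * \<delta>)"
      by (intro exI[of _ "(N, C)"]) simp
  qed
  then obtain f where f: "\<And>p. p \<in> S \<Longrightarrow> snd (f p) \<ge> 0 \<and> (\<forall>h \<delta> x. h \<in> schwartz \<longrightarrow> semis_le (fst (f p)) \<delta> h \<longrightarrow>
            \<bar>monom (fst p) x * Dpart (snd p) (Tm P Q h) x\<bar> \<le> snd (f p) * \<delta>)"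
    by metis
  define N where "N = (\<Sum>p\<in>S. fst (f p))"
  define C where "C = (\<Sum>p\<in>S. snd (f p))"
  show ?thesis
  proof (intro exI[of _ N] exI[of _ C] conjI allI impI)
    show "C \<ge> 0" unfolding C_def using f by (intro sum_nonneg) auto
    fix \<alpha> :: "'n \<Rightarrow> nat" and "is" :: "'n list" and h :: "real^'m \<Rightarrow> real" and \<delta> x
    assume a: "sum \<alpha> UNIV \<le> K" "length is \<le> K" and h: "h \<in> schwartz" and H: "semis_le N \<delta> h"
    have p: "(\<alpha>, is) \<in> S" unfolding S_def using a by simp
    have "fst (f (\<alpha>, is)) \<le> N" unfolding N_def using fS p by (intro member_le_sum) auto
    then have H': "semis_le (fst (f (\<alpha>, is))) \<delta> h" using H by (rule semis_le_mono[rotated])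
    have d0: "\<delta> \<ge> 0" by (rule semis_le_nonneg[OF h H])
    have "snd (f (\<alpha>, is)) \<le> C" unfolding C_def using fS p f by (intro member_le_sum) auto
    then have "snd (f (\<alpha>, is)) * \<delta> \<le> C * \<delta>" using d0 by (rule mult_right_mono)
    moreover have "\<bar>monom \<alpha> x * Dpart is (Tm P Q h) x\<bar> \<le> snd (f (\<alpha>, is)) * \<delta>"
      using f[OF p] h H' by auto
    ultimately show "\<bar>monom \<alpha> x * Dpart is (Tm P Q h) x\<bar> \<le> C * \<delta>" by linarith
  qed
qed

lemma Tm_schwartz:
  fixes P :: "real^'n \<Rightarrow> real^'m" and Q :: "real^'m \<Rightarrow> real^'n"
  assumes P: "poly_map P" and Q: "poly_map Q" and h: "h \<in> schwartz"
  shows "Tm P Q h \<in> schwartz"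
  unfolding schwartz_def
proof (intro CollectI conjI allI)
  show "smooth_fun (Tm P Q h)" by (rule Tm_smooth[OF P Q schwartz_smooth[OF h]])
  fix \<alpha> "is"
  from core_bound[OF P Q, of \<alpha> "is"] obtain N C where
    b: "\<And>h \<delta> x. h \<in> schwartz \<Longrightarrow> semis_le N \<delta> h \<Longrightarrow> \<bar>monom \<alpha> x * Dpart is (Tm P Q h) x\<bar> \<le> C * \<delta>"
    by blast
  obtain \<delta> where "semis_le N \<delta> h" using semis_le_exists[OF h] by blast
  then show "bounded (range (\<lambda>x. monom \<alpha> x * Dpart is (Tm P Q h) x))"
    unfolding bounded_iff using b[OF h] by auto
qed

lemma Dpart_diff:
  assumes f: "smooth_fun f" and g: "smooth_fun g"
  shows "Dpart is (\<lambda>x. f x - g x) = (\<lambda>x. Dpart is f x - Dpart is g x)"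
proof (induction "is")
  case Nil
  then show ?case by simp
next
  case (Cons i "is")
  show ?case
  proof (rule ext)
    fix x
    have "((\<lambda>t. Dpart is f (x + t *\<^sub>R axis i 1) - Dpart is g (x + t *\<^sub>R axis i 1)) has_real_derivative
        Dpart (i # is) f x - Dpart (i # is) g x) (at 0)"
      by (intro DERIV_diff sm_deriv f g)
    then show "Dpart (i # is) (\<lambda>x. f x - g x) x = Dpart (i # is) f x - Dpart (i # is) g x"
      by (simp only: Dpart.simps(2) Cons pdiff_def DERIV_imp_deriv)
  qed
qed

lemma schwartz_diff:
  assumes f: "f \<in> schwartz" and g: "g \<in> schwartz"
  shows "(\<lambda>x. f x - g x) \<in> schwartz"
proof -
  have sf: "smooth_fun f" and sg: "smooth_fun g" using f g by (auto simp: schwartz_def)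
  have "smooth_fun (\<lambda>x. f x - g x)"
    unfolding smooth_fun_def Dpart_diff[OF sf sg]
  proof (intro allI conjI)
    fix "is"
    show "continuous_on UNIV (\<lambda>x. Dpart is f x - Dpart is g x)"
      using sm_cont[OF sf] sm_cont[OF sg] by (intro continuous_intros) auto
    fix i x
    have "((\<lambda>t. Dpart is f (x + t *\<^sub>R axis i 1) - Dpart is g (x + t *\<^sub>R axis i 1)) has_real_derivative
        Dpart (i # is) f x - Dpart (i # is) g x) (at 0)"
      by (intro DERIV_diff sm_deriv sf sg)
    moreover have "pdiff i (\<lambda>x. Dpart is f x - Dpart is g x) x = Dpart (i # is) f x - Dpart (i # is) g x"
      using Dpart_diff[OF sf sg, of "i # is"] Dpart_diff[OF sf sg, of "is"] by (simp add: fun_eq_iff)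
    ultimately show "((\<lambda>t. Dpart is f (x + t *\<^sub>R axis i 1) - Dpart is g (x + t *\<^sub>R axis i 1)) has_real_derivative
        pdiff i (\<lambda>x. Dpart is f x - Dpart is g x) x) (at 0)" by simp
  qed
  moreover have "bounded (range (\<lambda>x. monom \<alpha> x * Dpart is (\<lambda>x. f x - g x) x))" for \<alpha> "is"
  proof -
    obtain B1 where B1: "\<And>x. \<bar>monom \<alpha> x * Dpart is f x\<bar> \<le> B1"
      using f unfolding schwartz_def bounded_iff by force
    obtain B2 where B2: "\<And>x. \<bar>monom \<alpha> x * Dpart is g x\<bar> \<le> B2"
      using g unfolding schwartz_def bounded_iff by force
    have "\<bar>monom \<alpha> x * Dpart is (\<lambda>x. f x - g x) x\<bar> \<le> B1 + B2" for x
    proof -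
      have "\<bar>monom \<alpha> x * Dpart is (\<lambda>x. f x - g x) x\<bar> = \<bar>monom \<alpha> x * Dpart is f x - monom \<alpha> x * Dpart is g x\<bar>"
        by (simp add: Dpart_diff[OF sf sg] right_diff_distrib)
      also have "\<dots> \<le> B1 + B2" using B1[of x] B2[of x] by linarith
      finally show ?thesis .
    qed
    then show ?thesis unfolding bounded_iff by auto
  qed
  ultimately show ?thesis by (simp add: schwartz_def)
qed

lemma Tm_diff: "Tm P Q (\<lambda>y. f y - g y) = (\<lambda>x. Tm P Q f x - Tm P Q g x)"
  by (simp add: Tm_def fun_eq_iff left_diff_distrib)



definition nb :: "nat \<Rightarrow> real \<Rightarrow> (real^'n::finite \<Rightarrow> real) \<Rightarrow> (real^'n \<Rightarrow> real) set" where
  "nb N \<epsilon> f = {g\<in>schwartz. \<forall>\<alpha> is. sum \<alpha> UNIV \<le> N \<longrightarrow> length is \<le> N \<longrightarrow>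
          sw_seminorm \<alpha> is (\<lambda>x. g x - f x) < \<epsilon>}"

lemma nb_mono:
  assumes "N1 \<le> N" "\<epsilon> \<le> \<epsilon>1"
  shows "nb N \<epsilon> f \<subseteq> nb N1 \<epsilon>1 f"
proof
  fix g assume g: "g \<in> nb N \<epsilon> f"
  show "g \<in> nb N1 \<epsilon>1 f"
    unfolding nb_def
  proof (intro CollectI conjI allI impI)
    show "g \<in> schwartz" using g by (simp add: nb_def)
    fix \<alpha> :: "'a \<Rightarrow> nat" and "is" :: "'a list"
    assume "sum \<alpha> UNIV \<le> N1" "length is \<le> N1"
    then have "sum \<alpha> UNIV \<le> N" "length is \<le> N" using assms by auto
    then have "sw_seminorm \<alpha> is (\<lambda>x. g x - f x) < \<epsilon>" using g by (simp add: nb_def)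
    then show "sw_seminorm \<alpha> is (\<lambda>x. g x - f x) < \<epsilon>1" using assms by simp
  qed
qed

lemma istop_nb: "istopology (\<lambda>V::(real^'n::finite \<Rightarrow> real) set. V \<subseteq> schwartz \<and>
     (\<forall>f\<in>V. \<exists>N::nat. \<exists>\<epsilon>>0. nb N \<epsilon> f \<subseteq> V))"
  unfolding istopology_def
proof (rule conjI; intro allI impI)
  fix S T :: "(real^'n \<Rightarrow> real) set"
  assume S: "S \<subseteq> schwartz \<and> (\<forall>f\<in>S. \<exists>N. \<exists>\<epsilon>>0. nb N \<epsilon> f \<subseteq> S)"
    and T: "T \<subseteq> schwartz \<and> (\<forall>f\<in>T. \<exists>N. \<exists>\<epsilon>>0. nb N \<epsilon> f \<subseteq> T)"
  show "S \<inter> T \<subseteq> schwartz \<and> (\<forall>f\<in>S \<inter> T. \<exists>N. \<exists>\<epsilon>>0. nb N \<epsilon> f \<subseteq> S \<inter> T)"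
  proof (intro conjI ballI)
    show "S \<inter> T \<subseteq> schwartz" using S T by auto
    fix f assume "f \<in> S \<inter> T"
    then obtain N1 e1 N2 e2 where "e1 > 0" "nb N1 e1 f \<subseteq> S" "e2 > 0" "nb N2 e2 f \<subseteq> T"
      using S T by blast
    moreover have "nb (max N1 N2) (min e1 e2) f \<subseteq> nb N1 e1 f" "nb (max N1 N2) (min e1 e2) f \<subseteq> nb N2 e2 f"
      by (simp_all add: nb_mono)
    ultimately show "\<exists>N. \<exists>\<epsilon>>0. nb N \<epsilon> f \<subseteq> S \<inter> T"
      by (intro exI[of _ "max N1 N2"] exI[of _ "min e1 e2"]) auto
  qed
next
  fix K :: "(real^'n \<Rightarrow> real) set set"
  assume K: "\<forall>S\<in>K. S \<subseteq> schwartz \<and> (\<forall>f\<in>S. \<exists>N. \<exists>\<epsilon>>0. nb N \<epsilon> f \<subseteq> S)"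
  show "\<Union>K \<subseteq> schwartz \<and> (\<forall>f\<in>\<Union>K. \<exists>N. \<exists>\<epsilon>>0. nb N \<epsilon> f \<subseteq> \<Union>K)"
  proof (intro conjI ballI)
    show "\<Union>K \<subseteq> schwartz" using K by auto
    fix f assume "f \<in> \<Union>K"
    then obtain S where "S \<in> K" "f \<in> S" by auto
    then obtain N e where "e > 0" "nb N e f \<subseteq> S" using K by blast
    then show "\<exists>N. \<exists>\<epsilon>>0. nb N \<epsilon> f \<subseteq> \<Union>K" using \<open>S \<in> K\<close> by blast
  qed
qed

lemma istop_sw: "istopology (\<lambda>V::(real^'n::finite \<Rightarrow> real) set. V \<subseteq> schwartz \<and>
     (\<forall>f\<in>V. \<exists>N::nat. \<exists>\<epsilon>>0. {g\<in>schwartz. \<forall>\<alpha> is. sum \<alpha> UNIV \<le> N \<longrightarrow> length is \<le> N \<longrightarrow>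
          sw_seminorm \<alpha> is (\<lambda>x. g x - f x) < \<epsilon>} \<subseteq> V))"
  using istop_nb unfolding nb_def .

lemma openin_sw: "openin schwartz_top V \<longleftrightarrow> V \<subseteq> schwartz \<and> (\<forall>f\<in>V. \<exists>N. \<exists>\<epsilon>>0. nb N \<epsilon> f \<subseteq> V)"
  unfolding schwartz_top_def topology_inverse'[OF istop_sw] nb_def ..

lemma istop_on: "istopology (\<lambda>U. U \<subseteq> schwartz_on (E::(real^'n::finite) set) \<and> openin schwartz_top {f \<in> schwartz. restr E f \<in> U})"
  unfolding istopology_def
proof (rule conjI; intro allI impI)
  fix S T :: "(real^'n \<Rightarrow> real) set"
  assume S: "S \<subseteq> schwartz_on E \<and> openin schwartz_top {f \<in> schwartz. restr E f \<in> S}"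
    and T: "T \<subseteq> schwartz_on E \<and> openin schwartz_top {f \<in> schwartz. restr E f \<in> T}"
  have "{f \<in> schwartz. restr E f \<in> S \<inter> T} = {f \<in> schwartz. restr E f \<in> S} \<inter> {f \<in> schwartz. restr E f \<in> T}"
    by auto
  then show "S \<inter> T \<subseteq> schwartz_on E \<and> openin schwartz_top {f \<in> schwartz. restr E f \<in> S \<inter> T}"
    using S T by auto
next
  fix K :: "(real^'n \<Rightarrow> real) set set"
  assume K: "\<forall>U\<in>K. U \<subseteq> schwartz_on E \<and> openin schwartz_top {f \<in> schwartz. restr E f \<in> U}"
  have "{f \<in> schwartz. restr E f \<in> \<Union>K} = \<Union>((\<lambda>U. {f \<in> schwartz. restr E f \<in> U}) ` K)"
    by auto
  moreover have "openin schwartz_top (\<Union>((\<lambda>U. {f \<in> schwartz. restr E f \<in> U}) ` K))"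
    using K by (intro openin_Union) auto
  ultimately show "\<Union>K \<subseteq> schwartz_on E \<and> openin schwartz_top {f \<in> schwartz. restr E f \<in> \<Union>K}"
    using K by auto
qed

lemma openin_on: "openin (schwartz_on_top E) U \<longleftrightarrow> U \<subseteq> schwartz_on E \<and> openin schwartz_top {f \<in> schwartz. restr E f \<in> U}"
  unfolding schwartz_on_top_def topology_inverse'[OF istop_on] ..

lemma openin_sw_all: "openin schwartz_top schwartz"
  unfolding openin_sw
  by (auto intro!: exI[of _ 0] exI[of _ 1] simp: nb_def)

lemma topspace_on: "topspace (schwartz_on_top E) = schwartz_on E"
proof -
  have "openin (schwartz_on_top E) (schwartz_on E)"
    unfolding openin_on
  proof
    have "{f \<in> schwartz. restr E f \<in> schwartz_on E} = schwartz" by (auto simp: schwartz_on_def)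
    then show "openin schwartz_top {f \<in> schwartz. restr E f \<in> schwartz_on E}" using openin_sw_all by simp
  qed simp
  then show ?thesis unfolding topspace_def using openin_on by blast
qed

lemma pb_eq:
  assumes "P ` E = F" "\<forall>x\<in>E. Q (P x) = x"
  shows "pullback E P (restr F h) = restr E (Tm P Q h)"
proof (rule ext)
  fix x
  show "pullback E P (restr F h) x = restr E (Tm P Q h) x"
  proof (cases "x \<in> E")
    case True
    then have "P x \<in> F" "Q (P x) = x" using assms by auto
    then show ?thesis using True
      by (simp add: pullback_def restr_def Tm_def psi_def rr_def)
  next
    case False
    then show ?thesis by (simp add: pullback_def restr_def)
  qed
qed

theorem lemma3p1:
  fixes E :: "(real^'n) set" and F :: "(real^'m) set"
    and P :: "real^'n \<Rightarrow> real^'m" and Q :: "real^'m \<Rightarrow> real^'n"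
  assumes "closed E" and "closed F"
    and "poly_map P" and "poly_map Q"
    and "P ` E = F"
    and "\<forall>x\<in>E. Q (P x) = x"
  shows "pullback E P ` schwartz_on F \<subseteq> schwartz_on E
    \<and> continuous_map (schwartz_on_top F) (schwartz_on_top E) (pullback E P)"
proof -
  note P = assms(3) and Q = assms(4)
  have pbeq: "\<And>h. pullback E P (restr F h) = restr E (Tm P Q h)"
    using pb_eq[OF assms(5,6)] .
  have img: "pullback E P ` schwartz_on F \<subseteq> schwartz_on E"
  proof
    fix u assume "u \<in> pullback E P ` schwartz_on F"
    then obtain h where h: "h \<in> schwartz" and u: "u = pullback E P (restr F h)"
      by (auto simp: schwartz_on_def)
    show "u \<in> schwartz_on E"
      unfolding u pbeq schwartz_on_def using Tm_schwartz[OF P Q h] by blast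
  qed
  have cont: "continuous_map (schwartz_on_top F) (schwartz_on_top E) (pullback E P)"
    unfolding continuous_map_def topspace_on
  proof (intro conjI allI impI)
    show "pullback E P \<in> schwartz_on F \<rightarrow> schwartz_on E" using img by auto
    fix U assume U: "openin (schwartz_on_top E) U"
    define W where "W = {g \<in> schwartz. restr E g \<in> U}"
    have W: "openin schwartz_top W" using U by (simp add: openin_on W_def)
    show "openin (schwartz_on_top F) {x \<in> schwartz_on F. pullback E P x \<in> U}"
      unfolding openin_on
    proof
      show "{x \<in> schwartz_on F. pullback E P x \<in> U} \<subseteq> schwartz_on F" by auto
      have eqV: "{f \<in> schwartz. restr F f \<in> {x \<in> schwartz_on F. pullback E P x \<in> U}} = {f \<in> schwartz. Tm P Q f \<in> W}"
        using pbeq Tm_schwartz[OF P Q] by (auto simp: W_def schwartz_on_def)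
      show "openin schwartz_top {f \<in> schwartz. restr F f \<in> {x \<in> schwartz_on F. pullback E P x \<in> U}}"
        unfolding eqV openin_sw
      proof (intro conjI ballI)
        show "{f \<in> schwartz. Tm P Q f \<in> W} \<subseteq> schwartz" by auto
        fix f0 assume f0: "f0 \<in> {f \<in> schwartz. Tm P Q f \<in> W}"
        then obtain N' \<epsilon>' where e': "\<epsilon>' > 0" and nbW: "nb N' \<epsilon>' (Tm P Q f0) \<subseteq> W"
          using W unfolding openin_sw by blast
        obtain N C where C: "C \<ge> 0" and ub: "\<And>\<alpha> is h \<delta> x. sum \<alpha> UNIV \<le> N' \<Longrightarrow> length is \<le> N' \<Longrightarrow> h \<in> schwartz \<Longrightarrow>
            semis_le N \<delta> h \<Longrightarrow> \<bar>monom \<alpha> x * Dpart is (Tm P Q h) x\<bar> \<le> C * \<delta>"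
          using uniform_bound[OF P Q, of N'] by blast
        define \<epsilon> where "\<epsilon> = \<epsilon>' / (C + 1)"
        have e: "\<epsilon> > 0" using e' C by (simp add: \<epsilon>_def)
        have Ce: "C * \<epsilon> < \<epsilon>'" using e' C by (simp add: \<epsilon>_def field_simps)
        show "\<exists>N. \<exists>\<epsilon>>0. nb N \<epsilon> f0 \<subseteq> {f \<in> schwartz. Tm P Q f \<in> W}"
        proof (intro exI[of _ N] exI[of _ \<epsilon>] conjI subsetI e)
          fix g assume g: "g \<in> nb N \<epsilon> f0"
          then have gs: "g \<in> schwartz"
            and gb: "\<And>\<alpha> is. sum \<alpha> UNIV \<le> N \<Longrightarrow> length is \<le> N \<Longrightarrow> sw_seminorm \<alpha> is (\<lambda>x. g x - f0 x) < \<epsilon>"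
            by (auto simp: nb_def)
          define h where "h = (\<lambda>x. g x - f0 x)"
          have hs: "h \<in> schwartz" unfolding h_def using gs f0 by (intro schwartz_diff) auto
          have Hh: "semis_le N \<epsilon> h" unfolding semis_le_def h_def using gb by (auto intro: less_imp_le)
          have Tg: "Tm P Q g \<in> schwartz" by (rule Tm_schwartz[OF P Q gs])
          have "Tm P Q g \<in> nb N' \<epsilon>' (Tm P Q f0)"
            unfolding nb_def
          proof (intro CollectI conjI allI impI Tg)
            fix \<alpha> :: "'n \<Rightarrow> nat" and "is" :: "'n list"
            assume a: "sum \<alpha> UNIV \<le> N'" "length is \<le> N'"
            have eqT: "(\<lambda>x. Tm P Q g x - Tm P Q f0 x) = Tm P Q h" by (simp add: h_def Tm_diff)
            have "sw_seminorm \<alpha> is (Tm P Q h) \<le> C * \<epsilon>"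
              unfolding sw_seminorm_def by (rule cSUP_least) (use ub[OF a hs Hh] in auto)
            also have "\<dots> < \<epsilon>'" by (rule Ce)
            finally show "sw_seminorm \<alpha> is (\<lambda>x. Tm P Q g x - Tm P Q f0 x) < \<epsilon>'" unfolding eqT .
          qed
          then show "g \<in> {f \<in> schwartz. Tm P Q f \<in> W}" using nbW gs by auto
        qed
      qed
    qed
  qed
  show ?thesis using img cont by simp
qed


end
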